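(* Let $X$ be a (real or complex) Banach space, $S$ a Hausdorff topological space, and $J\colon X\to C^{b}(S)$ a nice embedding (see context). For $s\in S$ let $p_s=J^{*}(\delta_s)\in X^{*}$, let $\Pi_s$ be the $L$-projection of $X^*$ onto $\operatorname{lin}\{p_s\}$, and let $\pi_s\in X^{**}$ be the functional with $\Pi_s(x^* )=\pi_s(x^* )\,p_s$ for all $x^*\in X^*$. Let $T\in L(X)$, put $q_s=T^{*}(p_s)$ for $s\in S$, and for $\varepsilon>0$ let $U_\varepsilon=\{s\in S:\ \|q_s\|>\|T\|-\varepsilon\}$ (an open subset of $S$). Then $T$ satisfies the Daugavet equation $\|\mathrm{Id}+T\|=1+\|T\|$ if and only if $$\sup_{s\in U_\varepsilon}\bigl(|1+\pi_s(q_s)|-(1+|\pi_s(q_s)|)\bigr)\ge 0\qquad\text{for all }\varepsilon>0.$$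
   Context: $C^{b}(S)$ denotes the sup-normed Banach space of bounded continuous scalar-valued functions on $S$, and $\delta_s$ the functional $f\mapsto f(s)$ on it. A closed subspace $F$ of a Banach space $E$ is an $L$-summand if there is a projection $\Pi$ of $E$ onto $F$ (an $L$-projection) with $\|\xi\|=\|\Pi\xi\|+\|\xi-\Pi\xi\|$ for all $\xi\in E$. A linear map $J\colon X\to C^b(S)$ is a nice embedding if $J$ is an isometry and for every $s\in S$: (N1) $p_s:=J^*(\delta_s)$ satisfies $\|p_s\|=1$; (N2) $\operatorname{lin}\{p_s\}$ is an $L$-summand in $X^*$. $L(X)$ denotes the bounded linear operators on $X$. *)

theory Defs
  imports "HOL-Analysis.Analysis"
begin

text \<open>Scalars: a type 'k of class real_normed_field (up to isomorphism exactly the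
  real or the complex numbers).  The Banach space X is a type 'a of class banach
  (real Banach space structure) together with a scalar multiplication by 'k that
  extends the real one and is norm-multiplicative; for 'k = real this is scaleR.\<close>

definition scalar_structure :: "('k::real_normed_field \<Rightarrow> 'a::real_normed_vector \<Rightarrow> 'a) \<Rightarrow> bool" where
  "scalar_structure sm \<longleftrightarrow>
     (\<forall>a b x. sm (a + b) x = sm a x + sm b x) \<and>
     (\<forall>a x y. sm a (x + y) = sm a x + sm a y) \<and>
     (\<forall>a b x. sm (a * b) x = sm a (sm b x)) \<and>
     (\<forall>r x. sm (of_real r) x = r *\<^sub>R x) \<and>
     (\<forall>a x. norm (sm a x) = norm a * norm x)"

definition klinear_op :: "('k::real_normed_field \<Rightarrow> 'a::real_normed_vector \<Rightarrow> 'a) \<Rightarrow> ('a \<Rightarrow> 'a) \<Rightarrow> bool" where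
  "klinear_op sm T \<longleftrightarrow> (\<forall>x y. T (x + y) = T x + T y) \<and> (\<forall>c x. T (sm c x) = sm c (T x))"

definition bounded_ops :: "('k::real_normed_field \<Rightarrow> 'a::real_normed_vector \<Rightarrow> 'a) \<Rightarrow> ('a \<Rightarrow> 'a) set" where
  "bounded_ops sm = {T. klinear_op sm T \<and> (\<exists>K. \<forall>x. norm (T x) \<le> K * norm x)}"

definition dual :: "('k::real_normed_field \<Rightarrow> 'a::real_normed_vector \<Rightarrow> 'a) \<Rightarrow> ('a \<Rightarrow> 'k) set" where
  "dual sm = {f. (\<forall>x y. f (x + y) = f x + f y) \<and> (\<forall>c x. f (sm c x) = c * f x) \<and>
                  (\<exists>K. \<forall>x. norm (f x) \<le> K * norm x)}"

definition L_projection :: "('k::real_normed_field \<Rightarrow> 'a::real_normed_vector \<Rightarrow> 'a) \<Rightarrow>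
    (('a \<Rightarrow> 'k) \<Rightarrow> ('a \<Rightarrow> 'k)) \<Rightarrow> ('a \<Rightarrow> 'k) set \<Rightarrow> bool" where
  "L_projection sm P F \<longleftrightarrow>
     F \<subseteq> dual sm \<and>
     P ` dual sm = F \<and>
     (\<forall>f\<in>dual sm. \<forall>g\<in>dual sm. P (\<lambda>x. f x + g x) = (\<lambda>x. P f x + P g x)) \<and>
     (\<forall>f\<in>dual sm. \<forall>c. P (\<lambda>x. c * f x) = (\<lambda>x. c * P f x)) \<and>
     (\<forall>f\<in>dual sm. P (P f) = P f) \<and>
     (\<forall>f\<in>dual sm. onorm f = onorm (P f) + onorm (\<lambda>x. f x - P f x))"

definition L_summand :: "('k::real_normed_field \<Rightarrow> 'a::real_normed_vector \<Rightarrow> 'a) \<Rightarrow> ('a \<Rightarrow> 'k) set \<Rightarrow> bool" where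
  "L_summand sm F \<longleftrightarrow> (\<exists>P. L_projection sm P F)"

definition lin1 :: "('a \<Rightarrow> 'k::real_normed_field) \<Rightarrow> ('a \<Rightarrow> 'k) set" where
  "lin1 f = {(\<lambda>x. c * f x) | c. True}"

text \<open>p_s = J*(delta_s)\<close>
definition peval :: "('a \<Rightarrow> ('s::topological_space \<Rightarrow>\<^sub>C 'k::real_normed_field)) \<Rightarrow> 's \<Rightarrow> 'a \<Rightarrow> 'k" where
  "peval J s = (\<lambda>x. apply_bcontfun (J x) s)"

definition nice_embedding :: "('k::real_normed_field \<Rightarrow> 'a::real_normed_vector \<Rightarrow> 'a) \<Rightarrow>
    ('a \<Rightarrow> ('s::topological_space \<Rightarrow>\<^sub>C 'k)) \<Rightarrow> bool" where
  "nice_embedding sm J \<longleftrightarrow>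
     (\<forall>x y. J (x + y) = J x + J y) \<and>
     (\<forall>c x s. apply_bcontfun (J (sm c x)) s = c * apply_bcontfun (J x) s) \<and>
     (\<forall>x. norm (J x) = norm x) \<and>
     (\<forall>s. onorm (peval J s) = 1) \<and>
     (\<forall>s. L_summand sm (lin1 (peval J s)))"

end

theory Submission
  imports Defs
begin

lemma dual_bl:
  assumes sm: "scalar_structure sm" and f: "f \<in> dual sm"
  shows "bounded_linear f"
proof -
  from f obtain K where K: "\<And>x. norm (f x) \<le> K * norm x" and add: "\<And>x y. f (x + y) = f x + f y"
    and hom: "\<And>c x. f (sm c x) = c * f x"
    unfolding dual_def by blast
  have "f (r *\<^sub>R x) = r *\<^sub>R f x" for r x
  proof -
    have "r *\<^sub>R x = sm (of_real r) x" using sm unfolding scalar_structure_def by simp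
    then show ?thesis using hom by (simp add: scaleR_conv_of_real)
  qed
  then show ?thesis
    by (intro bounded_linear_intro[where K=K]) (auto simp: add K mult.commute)
qed

lemma ops_bl:
  assumes sm: "scalar_structure sm" and T: "T \<in> bounded_ops sm"
  shows "bounded_linear T"
proof -
  from T obtain K where K: "\<And>x. norm (T x) \<le> K * norm x" and add: "\<And>x y. T (x + y) = T x + T y"
    and hom: "\<And>c x. T (sm c x) = sm c (T x)"
    unfolding bounded_ops_def klinear_op_def by blast
  have "T (r *\<^sub>R x) = r *\<^sub>R T x" for r x
  proof -
    have "\<And>y. r *\<^sub>R y = sm (of_real r) y" using sm unfolding scalar_structure_def by simp
    then show ?thesis using hom by metis
  qed
  then show ?thesis
    by (intro bounded_linear_intro[where K=K]) (auto simp: add K mult.commute)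
qed

lemma p_dual:
  assumes J: "nice_embedding sm J"
  shows "peval J s \<in> dual sm"
proof -
  have "norm (peval J s x) \<le> 1 * norm x" for x
    using norm_bounded[of "J x" s] J unfolding nice_embedding_def peval_def by simp
  moreover have "peval J s (x + y) = peval J s x + peval J s y" for x y
    using J unfolding nice_embedding_def peval_def by simp
  moreover have "peval J s (sm c x) = c * peval J s x" for c x
    using J unfolding nice_embedding_def peval_def by simp
  ultimately show ?thesis unfolding dual_def by blast
qed

lemma q_dual:
  assumes sm: "scalar_structure sm" and J: "nice_embedding sm J" and T: "T \<in> bounded_ops sm"
  shows "(\<lambda>x. peval J s (T x)) \<in> dual sm"
proof -
  have bl: "bounded_linear (\<lambda>x. peval J s (T x))"
    using bounded_linear_compose[OF dual_bl[OF sm p_dual[OF J]] ops_bl[OF sm T]] by simp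
  then obtain K where "\<And>x. norm (peval J s (T x)) \<le> norm x * K"
    using bounded_linear.bounded by blast
  hence "\<forall>x. norm (peval J s (T x)) \<le> K * norm x" by (simp add: mult.commute)
  moreover have "peval J s (T (x + y)) = peval J s (T x) + peval J s (T y)" for x y
    using T p_dual[OF J] unfolding bounded_ops_def klinear_op_def dual_def by simp
  moreover have "peval J s (T (sm c x)) = c * peval J s (T x)" for c x
    using T p_dual[OF J] unfolding bounded_ops_def klinear_op_def dual_def by simp
  ultimately show ?thesis unfolding dual_def by blast
qed

lemma onorm_cmult:
  fixes f :: "'a::real_normed_vector \<Rightarrow> 'k::real_normed_field"
  assumes f: "bounded_linear f"
  shows "onorm (\<lambda>x. c * f x) = norm c * onorm f"
proof (cases "c = 0")
  case True then show ?thesis by (simp add: onorm_zero)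
next
  case False
  have bl: "bounded_linear (\<lambda>x. c * f x)"
    using bounded_linear_compose[OF bounded_linear_mult_right f] by simp
  have up: "onorm (\<lambda>x. c * f x) \<le> norm c * onorm f"
    by (rule onorm_bound) (auto simp: norm_mult mult.assoc intro!: mult_left_mono onorm[OF f] onorm_pos_le[OF f] mult_nonneg_nonneg)
  have "onorm f \<le> norm (inverse c) * onorm (\<lambda>x. c * f x)"
  proof (rule onorm_bound)
    show "0 \<le> norm (inverse c) * onorm (\<lambda>x. c * f x)" using onorm_pos_le[OF bl] by simp
    fix x
    have "f x = inverse c * (c * f x)" using False by simp
    hence "norm (f x) = norm (inverse c) * norm (c * f x)" by (metis norm_mult)
    also have "\<dots> \<le> norm (inverse c) * (onorm (\<lambda>x. c * f x) * norm x)"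
      by (intro mult_left_mono onorm[OF bl, of x]) auto
    finally show "norm (f x) \<le> norm (inverse c) * onorm (\<lambda>x. c * f x) * norm x" by (simp add: mult.assoc)
  qed
  hence ineq: "norm c * onorm f \<le> norm c * (norm (inverse c) * onorm (\<lambda>x. c * f x))"
    by (intro mult_left_mono) auto
  have "norm c * (norm (inverse c) * onorm (\<lambda>x. c * f x)) = onorm (\<lambda>x. c * f x)"
    using False by (simp add: norm_inverse mult.assoc[symmetric])
  then have "norm c * onorm f \<le> onorm (\<lambda>x. c * f x)" using ineq by linarith
  then show ?thesis using up by simp
qed

lemma sup_a:
  assumes sm: "scalar_structure sm" and J: "nice_embedding sm J" and A: "bounded_linear A"
  shows "onorm (\<lambda>x. peval J s (A x)) \<le> onorm A"
proof (rule onorm_bound)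
  show "0 \<le> onorm A" by (rule onorm_pos_le[OF A])
  fix x
  have "norm (peval J s (A x)) \<le> norm (A x)"
    using norm_bounded[of "J (A x)" s] J unfolding nice_embedding_def peval_def by simp
  also have "\<dots> \<le> onorm A * norm x" by (rule onorm[OF A])
  finally show "norm (peval J s (A x)) \<le> onorm A * norm x" .
qed

lemma sup_b:
  assumes sm: "scalar_structure sm" and J: "nice_embedding sm J" and A: "bounded_linear A"
    and e: "e > 0"
  shows "\<exists>s. onorm (\<lambda>x. peval J s (A x)) > onorm A - e"
proof (cases "onorm A - e < 0")
  case True
  have "bounded_linear (\<lambda>x. peval J undefined (A x))"
    using bounded_linear_compose[OF dual_bl[OF sm p_dual[OF J]] A] by simp
  then have "0 \<le> onorm (\<lambda>x. peval J undefined (A x))" by (rule onorm_pos_le)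
  then show ?thesis using True by (intro exI[of _ undefined]) linarith
next
  case False
  have "\<exists>x. norm (A x) > (onorm A - e) * norm x"
  proof (rule ccontr)
    assume "\<not> ?thesis"
    hence "onorm A \<le> onorm A - e" using False by (intro onorm_bound) (auto simp: not_less)
    thus False using e by simp
  qed
  then obtain x where x: "norm (A x) > (onorm A - e) * norm x" by blast
  have "\<exists>s. norm (apply_bcontfun (J (A x)) s) > (onorm A - e) * norm x"
  proof (rule ccontr)
    assume "\<not> ?thesis"
    hence "norm (J (A x)) \<le> (onorm A - e) * norm x" by (intro norm_bound) (auto simp: not_less)
    thus False using x J unfolding nice_embedding_def by simp
  qed
  then obtain s where s: "norm (peval J s (A x)) > (onorm A - e) * norm x"
    unfolding peval_def by blast
  have bl: "bounded_linear (\<lambda>x. peval J s (A x))"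
    using bounded_linear_compose[OF dual_bl[OF sm p_dual[OF J]] A] by simp
  have "x \<noteq> 0" using x A by (auto simp: linear_simps)
  hence nx: "norm x > 0" by simp
  have "(onorm A - e) * norm x < onorm (\<lambda>x. peval J s (A x)) * norm x"
    using s onorm[OF bl, of x] by simp
  hence "onorm A - e < onorm (\<lambda>x. peval J s (A x))" using nx by simp
  thus ?thesis by blast
qed

lemma dual_add:
  assumes f: "f \<in> dual sm" and g: "g \<in> dual sm"
  shows "(\<lambda>x. f x + g x) \<in> dual sm"
proof -
  from f obtain K1 where K1: "\<And>x. norm (f x) \<le> K1 * norm x" unfolding dual_def by blast
  from g obtain K2 where K2: "\<And>x. norm (g x) \<le> K2 * norm x" unfolding dual_def by blast
  have "norm (f x + g x) \<le> (K1 + K2) * norm x" for x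
    using norm_triangle_ineq[of "f x" "g x"] K1[of x] K2[of x] by (simp add: distrib_right)
  then have "\<exists>K. \<forall>x. norm (f x + g x) \<le> K * norm x" by blast
  then show ?thesis using f g unfolding dual_def by (auto simp: algebra_simps)
qed

lemma decomp:
  assumes sm: "scalar_structure sm"
    and J: "nice_embedding sm J"
    and Pi: "L_projection sm P (lin1 (peval J s))"
    and pi: "\<And>f. f \<in> dual sm \<Longrightarrow> P f = (\<lambda>x. pr f * peval J s x)"
    and T: "T \<in> bounded_ops sm"
  shows "onorm (\<lambda>x. peval J s (x + T x)) = 1 + onorm (\<lambda>x. peval J s (T x))
     + (norm (1 + pr (\<lambda>x. peval J s (T x))) - (1 + norm (pr (\<lambda>x. peval J s (T x)))))"
proof -
  define p where "p = peval J s"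
  define q where "q = (\<lambda>x. p (T x))"
  have pd: "p \<in> dual sm" unfolding p_def by (rule p_dual[OF J])
  have qd: "q \<in> dual sm" unfolding q_def p_def by (rule q_dual[OF sm J T])
  have p1: "onorm p = 1" using J unfolding nice_embedding_def p_def by simp
  have pbl: "bounded_linear p" by (rule dual_bl[OF sm pd])
  have "p \<in> lin1 p" unfolding lin1_def by (auto intro!: exI[of _ 1])
  hence "p \<in> P ` dual sm" using Pi unfolding L_projection_def p_def by simp
  then obtain g where g: "g \<in> dual sm" "P g = p" by blast
  have Pp: "P p = p" using Pi g unfolding L_projection_def by metis
  have eq: "(\<lambda>x. p (x + T x)) = (\<lambda>x. p x + q x)"
    using pd unfolding q_def dual_def by auto
  have fd: "(\<lambda>x. p x + q x) \<in> dual sm" by (rule dual_add[OF pd qd])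
  have Pq: "P q = (\<lambda>x. pr q * p x)" using pi[OF qd] unfolding p_def .
  have Pf: "P (\<lambda>x. p x + q x) = (\<lambda>x. (1 + pr q) * p x)"
    using Pi pd qd Pp Pq unfolding L_projection_def by (simp add: algebra_simps)
  have L1: "onorm (\<lambda>x. p x + q x) = onorm (P (\<lambda>x. p x + q x)) + onorm (\<lambda>x. (p x + q x) - P (\<lambda>x. p x + q x) x)"
    using Pi fd unfolding L_projection_def p_def by blast
  have L2: "onorm q = onorm (P q) + onorm (\<lambda>x. q x - P q x)"
    using Pi qd unfolding L_projection_def p_def by blast
  have r: "(\<lambda>x. (p x + q x) - P (\<lambda>x. p x + q x) x) = (\<lambda>x. q x - P q x)"
    unfolding Pf Pq by (auto simp: algebra_simps)
  have "onorm (\<lambda>x. p x + q x) = norm (1 + pr q) + onorm (\<lambda>x. q x - P q x)"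
    using L1[unfolded r] unfolding Pf onorm_cmult[OF pbl] p1 by simp
  moreover have "onorm q = norm (pr q) + onorm (\<lambda>x. q x - P q x)"
    using L2 unfolding Pq onorm_cmult[OF pbl] p1 by simp
  ultimately show ?thesis using eq unfolding p_def[symmetric] q_def[symmetric] by simp
qed

lemma d_nonpos: "norm (1 + (c::'k::real_normed_field)) - (1 + norm c) \<le> 0"
  using norm_triangle_ineq[of 1 c] by simp


theorem lemma2p1:
  fixes sm :: "'k::real_normed_field \<Rightarrow> 'a::banach \<Rightarrow> 'a"
    and J :: "'a \<Rightarrow> ('s::t2_space \<Rightarrow>\<^sub>C 'k)"
    and Pi :: "'s \<Rightarrow> ('a \<Rightarrow> 'k) \<Rightarrow> ('a \<Rightarrow> 'k)"
    and pi :: "'s \<Rightarrow> ('a \<Rightarrow> 'k) \<Rightarrow> 'k"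
    and T :: "'a \<Rightarrow> 'a"
  assumes sm: "scalar_structure sm"
    and J: "nice_embedding sm J"
    and Pi: "\<And>s. L_projection sm (Pi s) (lin1 (peval J s))"
    and pi: "\<And>s f. f \<in> dual sm \<Longrightarrow> Pi s f = (\<lambda>x. pi s f * peval J s x)"
    and T: "T \<in> bounded_ops sm"
  shows "onorm (\<lambda>x. x + T x) = 1 + onorm T \<longleftrightarrow>
    (\<forall>\<epsilon>>0. (SUP s\<in>{s. onorm (\<lambda>x. peval J s (T x)) > onorm T - \<epsilon>}.
         ereal (norm (1 + pi s (\<lambda>x. peval J s (T x))) - (1 + norm (pi s (\<lambda>x. peval J s (T x))))))
       \<ge> 0)"

proof -
  define a where "a = (\<lambda>s. onorm (\<lambda>x. peval J s (T x)))"
  define d where "d = (\<lambda>s. norm (1 + pi s (\<lambda>x. peval J s (T x))) - (1 + norm (pi s (\<lambda>x. peval J s (T x)))))"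
  define b where "b = (\<lambda>s. onorm (\<lambda>x. peval J s (x + T x)))"
  define M where "M = onorm (\<lambda>x. x + T x)"
  define N where "N = onorm T"
  have Tbl: "bounded_linear T" by (rule ops_bl[OF sm T])
  have Abl: "bounded_linear (\<lambda>x. x + T x)" by (intro bounded_linear_add bounded_linear_ident Tbl)
  have bd: "b s = 1 + a s + d s" for s
    unfolding a_def b_def d_def by (rule decomp[OF sm J Pi pi T])
  have dn: "d s \<le> 0" for s unfolding d_def by (rule d_nonpos)
  have aN: "a s \<le> N" for s unfolding a_def N_def by (rule sup_a[OF sm J Tbl])
  have bM: "b s \<le> M" for s unfolding b_def M_def by (rule sup_a[OF sm J Abl])
  have bE: "\<exists>s. b s > M - e" if "e > 0" for e
    unfolding b_def M_def by (rule sup_b[OF sm J Abl that])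
  have M1: "M \<le> 1 + N"
  proof (rule ccontr)
    assume "\<not> ?thesis"
    then obtain s where "b s > M - (M - 1 - N)" using bE[of "M - 1 - N"] by auto
    thus False using bd[of s] aN[of s] dn[of s] by simp
  qed
  have "M = 1 + N \<longleftrightarrow> (\<forall>\<epsilon>>0. (SUP s\<in>{s. a s > N - \<epsilon>}. ereal (d s)) \<ge> 0)"
  proof
    assume MN: "M = 1 + N"
    show "\<forall>\<epsilon>>0. (SUP s\<in>{s. a s > N - \<epsilon>}. ereal (d s)) \<ge> 0"
    proof (intro allI impI)
      fix \<epsilon> :: real assume e: "\<epsilon> > 0"
      show "0 \<le> (SUP s\<in>{s. a s > N - \<epsilon>}. ereal (d s))"
      proof (rule ereal_le_epsilon2)
        fix \<delta> :: real assume dl: "0 < \<delta>"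
        obtain s where s: "b s > M - min \<delta> \<epsilon>" using bE[of "min \<delta> \<epsilon>"] dl e by auto
        have sU: "s \<in> {s. a s > N - \<epsilon>}" using s bd[of s] dn[of s] MN by simp
        have ds: "d s + \<delta> \<ge> 0" using s bd[of s] aN[of s] MN by simp
        have "ereal (d s) \<le> (SUP s\<in>{s. a s > N - \<epsilon>}. ereal (d s))"
          by (rule SUP_upper[OF sU])
        hence "ereal (d s) + ereal \<delta> \<le> (SUP s\<in>{s. a s > N - \<epsilon>}. ereal (d s)) + ereal \<delta>"
          by (rule add_right_mono)
        moreover have "0 \<le> ereal (d s) + ereal \<delta>" using ds by simp
        ultimately show "0 \<le> (SUP s\<in>{s. a s > N - \<epsilon>}. ereal (d s)) + ereal \<delta>"
          by (rule order_trans[rotated])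
      qed
    qed
  next
    assume H: "\<forall>\<epsilon>>0. (SUP s\<in>{s. a s > N - \<epsilon>}. ereal (d s)) \<ge> 0"
    have "1 + N \<le> M"
    proof (rule field_le_epsilon)
      fix e :: real assume e: "0 < e"
      have "\<exists>s\<in>{s. a s > N - e/2}. ereal (d s) > - ereal (e/2)"
      proof (rule ccontr)
        assume "\<not> ?thesis"
        hence "(SUP s\<in>{s. a s > N - e/2}. ereal (d s)) \<le> - ereal (e/2)"
          by (intro SUP_least) (force simp: not_less)
        moreover have "(SUP s\<in>{s. a s > N - e/2}. ereal (d s)) \<ge> 0" using H e by simp
        ultimately have "(0::ereal) \<le> ereal (- (e/2))" by (metis order_trans uminus_ereal.simps(1))
        thus False using e by simp
      qed
      then obtain s where "a s > N - e/2" "d s > - (e/2)" by auto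
      thus "1 + N \<le> M + e" using bd[of s] bM[of s] by simp
    qed
    thus "M = 1 + N" using M1 by simp
  qed
  thus ?thesis unfolding a_def d_def M_def N_def .
qed

end
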